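(* Let $M$ be a mode for a program $P$ such that $P$ is safe w.r.t. $M$ and $P$ satisfies $M$. Let $\mathit{Diseqs}$ be a conjunction of disequations and $G$ a goal with $vars(\mathit{Diseqs})\cap vars(G)=\emptyset$. Then: (i) $(G,\mathit{Diseqs})\longmapsto^*_P\mathit{true}$ iff $(\mathit{Diseqs},G)\longmapsto^*_P\mathit{true}$; (ii) $\mu(P,(G,\mathit{Diseqs}))=\mu(P,(\mathit{Diseqs},G))$; (iii) $\nu(P,(G,\mathit{Diseqs}))=\nu(P,(\mathit{Diseqs},G))$.
   Context: Predicate symbols $\mathit{true}$, $=$, $\neq$ are basic, all others non-basic. Basic atoms: $\mathit{true}$, $t_1=t_2$, $t_1\neq t_2$ (disequation); non-basic atoms $p(t_1,\dots,t_m)$, $p$ non-basic. A goal is a conjunction of atoms ("," associative, neutral element $\mathit{true}$). A clause $C$ is $A\leftarrow G$ with non-basic head $hd(C)$ and body $bd(C)$; a program is a set of clauses. All mgu's are relevant and idempotent. A variable $X$ is a local variable of goal $G$ in clause $H\leftarrow G_1,G,G_2$ iff $X\in vars(G)-vars(H,G_1,G_2)$. Operational semantics: (1) $(t_1=t_2,G)\longmapsto_P G\vartheta$ if $t_1,t_2$ unify with mgu $\vartheta$; (2) $(t_1\neq t_2,G)\longmapsto_P G$ if not unifiable; (3) $(A,G)\longmapsto_P(bd(C),G)\vartheta$ if $A$ is non-basic, $C$ a renamed apart clause of $P$ and $\vartheta$ an mgu of $A$ and $hd(C)$. A derivation is $G_0\longmapsto_P\cdots\longmapsto_P G_z$, of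 length $z$; successful if $G_z=\mathit{true}$. $\longmapsto^*_P$ is the reflexive-transitive closure. For a derivation $\delta$, $\lambda(\delta)$ is the number of goals $G_i$ in $\delta$ of the form $(A,K)$ with $A$ non-basic. $\mu(P,G)$ is the minimum of $\lambda(\delta)$ over successful derivations $\delta$ of $G$ in $P$, and $\infty$ if $G$ does not succeed; $\nu(P,G)$ is the minimum length of a successful derivation of $G$ in $P$, and $\infty$ if none. Modes: a mode for non-basic $p$ of arity $h$ is $p(m_1,\dots,m_h)$, $m_i\in\{+,?\}$; $t_i$ is an input argument iff $m_i=+$; variables in input arguments are input variables; a mode for a program contains exactly one mode per non-basic predicate occurring in it. An atom satisfies $M$ iff $M$ has a mode for its predicate and its input arguments are ground. $P$ satisfies $M$ iff for every non-basic $A_0$ satisfying $M$ and every non-basic $A$ and goal $G$ with $A_0\longmapsto^*_P(A,G)$, $A$ satisfies $M$. A clause $C$ is safe w.r.t. $M$ iff each variable of each disequation $t_1\neq t_2$ in $bd(C)$ is an input variable of $hd(C)$ or a local variable of $t_1\neq t_2$ in $C$; a program is safe iff all its clauses are. *)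

theory Defs
  imports Main "HOL-Library.Extended_Nat" "HOL-Library.Infinite_Typeclass"
begin

datatype ('f, 'v) trm = Var 'v | Fn 'f "('f, 'v) trm list"

text \<open>Atoms. The basic atom true is the neutral element of conjunction; goals are
  lists of atoms (conjunction is associative), and true is represented by the empty goal.\<close>
datatype ('f, 'p, 'v) atom =
    Eq "('f, 'v) trm" "('f, 'v) trm"
  | Neq "('f, 'v) trm" "('f, 'v) trm"
  | Pred 'p "('f, 'v) trm list"

type_synonym ('f, 'p, 'v) goal = "('f, 'p, 'v) atom list"

datatype ('f, 'p, 'v) clause = Clause 'p "('f, 'v) trm list" "('f, 'p, 'v) goal"

fun hd_cl :: "('f, 'p, 'v) clause \<Rightarrow> ('f, 'p, 'v) atom" where
  "hd_cl (Clause p ts B) = Pred p ts"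

fun bd_cl :: "('f, 'p, 'v) clause \<Rightarrow> ('f, 'p, 'v) goal" where
  "bd_cl (Clause p ts B) = B"

type_synonym ('f, 'p, 'v) program = "('f, 'p, 'v) clause set"

fun nonbasic :: "('f, 'p, 'v) atom \<Rightarrow> bool" where
  "nonbasic (Pred p ts) = True"
| "nonbasic _ = False"

fun vars_trm :: "('f, 'v) trm \<Rightarrow> 'v set" where
  "vars_trm (Var x) = {x}"
| "vars_trm (Fn f ts) = (\<Union>t\<in>set ts. vars_trm t)"

fun vars_atom :: "('f, 'p, 'v) atom \<Rightarrow> 'v set" where
  "vars_atom (Eq s t) = vars_trm s \<union> vars_trm t"
| "vars_atom (Neq s t) = vars_trm s \<union> vars_trm t"
| "vars_atom (Pred p ts) = (\<Union>t\<in>set ts. vars_trm t)"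

definition vars_goal :: "('f, 'p, 'v) goal \<Rightarrow> 'v set" where
  "vars_goal G = (\<Union>A\<in>set G. vars_atom A)"

definition vars_clause :: "('f, 'p, 'v) clause \<Rightarrow> 'v set" where
  "vars_clause C = vars_atom (hd_cl C) \<union> vars_goal (bd_cl C)"

definition ground :: "('f, 'v) trm \<Rightarrow> bool" where
  "ground t \<longleftrightarrow> vars_trm t = {}"

type_synonym ('f, 'v) subst = "'v \<Rightarrow> ('f, 'v) trm"

fun subst_trm :: "('f, 'v) subst \<Rightarrow> ('f, 'v) trm \<Rightarrow> ('f, 'v) trm" where
  "subst_trm \<sigma> (Var x) = \<sigma> x"
| "subst_trm \<sigma> (Fn f ts) = Fn f (map (subst_trm \<sigma>) ts)"

fun subst_atom :: "('f, 'v) subst \<Rightarrow> ('f, 'p, 'v) atom \<Rightarrow> ('f, 'p, 'v) atom" where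
  "subst_atom \<sigma> (Eq s t) = Eq (subst_trm \<sigma> s) (subst_trm \<sigma> t)"
| "subst_atom \<sigma> (Neq s t) = Neq (subst_trm \<sigma> s) (subst_trm \<sigma> t)"
| "subst_atom \<sigma> (Pred p ts) = Pred p (map (subst_trm \<sigma>) ts)"

definition subst_goal :: "('f, 'v) subst \<Rightarrow> ('f, 'p, 'v) goal \<Rightarrow> ('f, 'p, 'v) goal" where
  "subst_goal \<sigma> G = map (subst_atom \<sigma>) G"

fun subst_clause :: "('f, 'v) subst \<Rightarrow> ('f, 'p, 'v) clause \<Rightarrow> ('f, 'p, 'v) clause" where
  "subst_clause \<sigma> (Clause p ts B) = Clause p (map (subst_trm \<sigma>) ts) (subst_goal \<sigma> B)"

definition subst_comp :: "('f, 'v) subst \<Rightarrow> ('f, 'v) subst \<Rightarrow> ('f, 'v) subst" where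
  "subst_comp \<sigma> \<tau> = (\<lambda>x. subst_trm \<tau> (\<sigma> x))"

definition subst_dom :: "('f, 'v) subst \<Rightarrow> 'v set" where
  "subst_dom \<sigma> = {x. \<sigma> x \<noteq> Var x}"

definition subst_vars :: "('f, 'v) subst \<Rightarrow> 'v set" where
  "subst_vars \<sigma> = subst_dom \<sigma> \<union> (\<Union>x\<in>subst_dom \<sigma>. vars_trm (\<sigma> x))"

definition unifier :: "('f, 'v) subst \<Rightarrow> (('f, 'v) trm \<times> ('f, 'v) trm) list \<Rightarrow> bool" where
  "unifier \<sigma> E \<longleftrightarrow> (\<forall>(s, t)\<in>set E. subst_trm \<sigma> s = subst_trm \<sigma> t)"

definition unifiable :: "(('f, 'v) trm \<times> ('f, 'v) trm) list \<Rightarrow> bool" where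
  "unifiable E \<longleftrightarrow> (\<exists>\<sigma>. unifier \<sigma> E)"

text \<open>Most general unifiers; by the standing convention all mgus are relevant and idempotent.\<close>
definition is_mgu :: "('f, 'v) subst \<Rightarrow> (('f, 'v) trm \<times> ('f, 'v) trm) list \<Rightarrow> bool" where
  "is_mgu \<sigma> E \<longleftrightarrow> unifier \<sigma> E
     \<and> (\<forall>\<tau>. unifier \<tau> E \<longrightarrow> (\<exists>\<eta>. \<tau> = subst_comp \<sigma> \<eta>))
     \<and> subst_vars \<sigma> \<subseteq> (\<Union>(s, t)\<in>set E. vars_trm s \<union> vars_trm t)
     \<and> subst_comp \<sigma> \<sigma> = \<sigma>"

fun mgu_atoms :: "('f, 'v) subst \<Rightarrow> ('f, 'p, 'v) atom \<Rightarrow> ('f, 'p, 'v) atom \<Rightarrow> bool" where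
  "mgu_atoms \<sigma> (Pred p ts) (Pred q us) \<longleftrightarrow>
     p = q \<and> length ts = length us \<and> is_mgu \<sigma> (zip ts us)"
| "mgu_atoms \<sigma> _ _ \<longleftrightarrow> False"

definition variant :: "('f, 'p, 'v) clause \<Rightarrow> ('f, 'p, 'v) clause \<Rightarrow> bool" where
  "variant C' C \<longleftrightarrow> (\<exists>\<rho>. bij \<rho> \<and> C' = subst_clause (\<lambda>x. Var (\<rho> x)) C)"

inductive step :: "('f, 'p, 'v) program \<Rightarrow> ('f, 'p, 'v) goal \<Rightarrow> ('f, 'p, 'v) goal \<Rightarrow> bool"
  for P where
  eq: "is_mgu \<theta> [(t1, t2)] \<Longrightarrow> step P (Eq t1 t2 # G) (subst_goal \<theta> G)"
| neq: "\<not> unifiable [(t1, t2)] \<Longrightarrow> step P (Neq t1 t2 # G) G"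
| res: "nonbasic A \<Longrightarrow> C \<in> P \<Longrightarrow> variant C' C
        \<Longrightarrow> vars_clause C' \<inter> vars_goal (A # G) = {}
        \<Longrightarrow> mgu_atoms \<theta> A (hd_cl C')
        \<Longrightarrow> step P (A # G) (subst_goal \<theta> (bd_cl C' @ G))"

abbreviation steps :: "('f, 'p, 'v) program \<Rightarrow> ('f, 'p, 'v) goal \<Rightarrow> ('f, 'p, 'v) goal \<Rightarrow> bool" where
  "steps P \<equiv> (step P)\<^sup>*\<^sup>*"

text \<open>A derivation G_0 \<longmapsto> ... \<longmapsto> G_z is the nonempty list [G_0, ..., G_z]; its length is z.\<close>
definition derivation :: "('f, 'p, 'v) program \<Rightarrow> ('f, 'p, 'v) goal list \<Rightarrow> bool" where
  "derivation P ds \<longleftrightarrow> ds \<noteq> [] \<and> (\<forall>i. Suc i < length ds \<longrightarrow> step P (ds ! i) (ds ! Suc i))"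

definition successful_derivation ::
  "('f, 'p, 'v) program \<Rightarrow> ('f, 'p, 'v) goal \<Rightarrow> ('f, 'p, 'v) goal list \<Rightarrow> bool" where
  "successful_derivation P G ds \<longleftrightarrow> derivation P ds \<and> hd ds = G \<and> last ds = []"

definition deriv_length :: "('f, 'p, 'v) goal list \<Rightarrow> nat" where
  "deriv_length ds = length ds - 1"

definition lambda_d :: "('f, 'p, 'v) goal list \<Rightarrow> nat" where
  "lambda_d ds = length (filter (\<lambda>g. g \<noteq> [] \<and> nonbasic (hd g)) ds)"

definition mu :: "('f, 'p, 'v) program \<Rightarrow> ('f, 'p, 'v) goal \<Rightarrow> enat" where
  "mu P G = (INF ds \<in> {ds. successful_derivation P G ds}. enat (lambda_d ds))"

definition nu :: "('f, 'p, 'v) program \<Rightarrow> ('f, 'p, 'v) goal \<Rightarrow> enat" where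
  "nu P G = (INF ds \<in> {ds. successful_derivation P G ds}. enat (deriv_length ds))"

text \<open>A mode assignment: for each predicate at most one mode, a list of flags (True = +).\<close>
type_synonym 'p modes = "'p \<Rightarrow> bool list option"

definition preds_goal :: "('f, 'p, 'v) goal \<Rightarrow> ('p \<times> nat) set" where
  "preds_goal G = {(p, length ts) | p ts. Pred p ts \<in> set G}"

definition preds_prog :: "('f, 'p, 'v) program \<Rightarrow> ('p \<times> nat) set" where
  "preds_prog P = (\<Union>C\<in>P. preds_goal (hd_cl C # bd_cl C))"

definition mode_for :: "'p modes \<Rightarrow> ('f, 'p, 'v) program \<Rightarrow> bool" where
  "mode_for M P \<longleftrightarrow> dom M = fst ` preds_prog P
     \<and> (\<forall>(p, n)\<in>preds_prog P. \<exists>m. M p = Some m \<and> length m = n)"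

fun sat_mode :: "'p modes \<Rightarrow> ('f, 'p, 'v) atom \<Rightarrow> bool" where
  "sat_mode M (Pred p ts) \<longleftrightarrow> (\<exists>m. M p = Some m \<and> length m = length ts
       \<and> (\<forall>i < length ts. m ! i \<longrightarrow> ground (ts ! i)))"
| "sat_mode M _ \<longleftrightarrow> False"

definition prog_satisfies :: "('f, 'p, 'v) program \<Rightarrow> 'p modes \<Rightarrow> bool" where
  "prog_satisfies P M \<longleftrightarrow> (\<forall>A0 A G. nonbasic A0 \<and> sat_mode M A0 \<and> steps P [A0] (A # G)
       \<and> nonbasic A \<longrightarrow> sat_mode M A)"

fun input_vars :: "'p modes \<Rightarrow> ('f, 'p, 'v) atom \<Rightarrow> 'v set" where
  "input_vars M (Pred p ts) = (case M p of None \<Rightarrow> {}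
      | Some m \<Rightarrow> (\<Union>i\<in>{i. i < length ts \<and> i < length m \<and> m ! i}. vars_trm (ts ! i)))"
| "input_vars M _ = {}"

definition safe_clause :: "'p modes \<Rightarrow> ('f, 'p, 'v) clause \<Rightarrow> bool" where
  "safe_clause M C \<longleftrightarrow> (\<forall>k t1 t2. k < length (bd_cl C) \<and> bd_cl C ! k = Neq t1 t2 \<longrightarrow>
     (\<forall>x\<in>vars_trm t1 \<union> vars_trm t2.
        x \<in> input_vars M (hd_cl C)
        \<or> x \<notin> vars_atom (hd_cl C) \<union> vars_goal (take k (bd_cl C)) \<union> vars_goal (drop (Suc k) (bd_cl C))))"

definition safe_prog :: "'p modes \<Rightarrow> ('f, 'p, 'v) program \<Rightarrow> bool" where
  "safe_prog M P \<longleftrightarrow> (\<forall>C\<in>P. safe_clause M C)"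

definition is_diseq :: "('f, 'p, 'v) atom \<Rightarrow> bool" where
  "is_diseq A \<longleftrightarrow> (\<exists>s t. A = Neq s t)"

end

theory Submission
  imports Defs
begin

definition rnm :: "('v \<Rightarrow> 'v) \<Rightarrow> ('f, 'v) subst" where
  "rnm \<pi> = (\<lambda>x. Var (\<pi> x))"

definition cnj :: "('v \<Rightarrow> 'v) \<Rightarrow> ('f, 'v) subst \<Rightarrow> ('f, 'v) subst" where
  "cnj \<pi> \<theta> = (\<lambda>x. subst_trm (rnm \<pi>) (\<theta> (\<pi> x)))"

lemma subst_trm_comp: "subst_trm \<sigma> (subst_trm \<tau> t) = subst_trm (subst_comp \<tau> \<sigma>) t"
  by (induction t) (auto simp: subst_comp_def)

lemma subst_atom_comp: "subst_atom \<sigma> (subst_atom \<tau> A) = subst_atom (subst_comp \<tau> \<sigma>) A"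
  by (cases A) (auto simp: subst_trm_comp)

lemma subst_goal_comp: "subst_goal \<sigma> (subst_goal \<tau> G) = subst_goal (subst_comp \<tau> \<sigma>) G"
  by (auto simp: subst_goal_def subst_atom_comp)

lemma subst_clause_comp: "subst_clause \<sigma> (subst_clause \<tau> C) = subst_clause (subst_comp \<tau> \<sigma>) C"
  by (cases C) (auto simp: subst_trm_comp subst_goal_comp)

lemma subst_trm_id_on: "(\<forall>x\<in>vars_trm t. \<sigma> x = Var x) \<Longrightarrow> subst_trm \<sigma> t = t"
  by (induction t) (auto intro: map_idI)

lemma subst_atom_id_on: "(\<forall>x\<in>vars_atom A. \<sigma> x = Var x) \<Longrightarrow> subst_atom \<sigma> A = A"
  by (cases A) (auto simp: subst_trm_id_on intro: map_idI)

lemma subst_goal_id_on: "(\<forall>x\<in>vars_goal G. \<sigma> x = Var x) \<Longrightarrow> subst_goal \<sigma> G = G"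
  by (auto simp: subst_goal_def vars_goal_def subst_atom_id_on intro: map_idI)

lemma subst_goal_append[simp]: "subst_goal \<sigma> (G @ H) = subst_goal \<sigma> G @ subst_goal \<sigma> H"
  by (simp add: subst_goal_def)

lemma subst_goal_Cons[simp]: "subst_goal \<sigma> (A # H) = subst_atom \<sigma> A # subst_goal \<sigma> H"
  by (simp add: subst_goal_def)

lemma subst_goal_Nil[simp]: "subst_goal \<sigma> [] = []"
  by (simp add: subst_goal_def)

lemma vars_goal_simps[simp]: "vars_goal [] = {}" "vars_goal (A # G) = vars_atom A \<union> vars_goal G"
  "vars_goal (G @ H) = vars_goal G \<union> vars_goal H"
  by (auto simp: vars_goal_def)

lemma vars_subst_trm: "vars_trm (subst_trm \<sigma> t) = (\<Union>x\<in>vars_trm t. vars_trm (\<sigma> x))"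
  by (induction t) auto

lemma vars_subst_atom: "vars_atom (subst_atom \<sigma> A) = (\<Union>x\<in>vars_atom A. vars_trm (\<sigma> x))"
  by (cases A) (auto simp: vars_subst_trm)

lemma vars_subst_goal: "vars_goal (subst_goal \<sigma> G) = (\<Union>x\<in>vars_goal G. vars_trm (\<sigma> x))"
  by (induction G) (auto simp: vars_subst_atom)

lemma vars_subst_bound: "(\<Union>x\<in>X. vars_trm (\<sigma> x)) \<subseteq> X \<union> subst_vars \<sigma>"
proof
  fix y assume "y \<in> (\<Union>x\<in>X. vars_trm (\<sigma> x))"
  then obtain x where x: "x \<in> X" "y \<in> vars_trm (\<sigma> x)" by auto
  show "y \<in> X \<union> subst_vars \<sigma>"
  proof (cases "x \<in> subst_dom \<sigma>")
    case True then show ?thesis using x by (auto simp: subst_vars_def)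
  next
    case False then have "\<sigma> x = Var x" by (simp add: subst_dom_def)
    then show ?thesis using x by simp
  qed
qed

lemma vars_subst_goal_bound: "vars_goal (subst_goal \<sigma> G) \<subseteq> vars_goal G \<union> subst_vars \<sigma>"
  using vars_subst_bound[where X="vars_goal G" and \<sigma>=\<sigma>] by (simp add: vars_subst_goal)

lemma subst_goal_disj: "subst_vars \<sigma> \<inter> vars_goal G = {} \<Longrightarrow> subst_goal \<sigma> G = G"
  by (rule subst_goal_id_on) (auto simp: subst_vars_def subst_dom_def)

lemma finite_vars_trm[simp]: "finite (vars_trm t)"
  by (induction t) auto

lemma finite_vars_atom[simp]: "finite (vars_atom A)"
  by (cases A) auto

lemma finite_vars_goal[simp]: "finite (vars_goal G)"
  by (induction G) auto

lemma finite_vars_clause[simp]: "finite (vars_clause C)"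
  by (simp add: vars_clause_def)

lemma hd_subst_clause[simp]: "hd_cl (subst_clause \<sigma> C) = subst_atom \<sigma> (hd_cl C)"
  by (cases C) auto

lemma bd_subst_clause[simp]: "bd_cl (subst_clause \<sigma> C) = subst_goal \<sigma> (bd_cl C)"
  by (cases C) auto

lemma mgu_vars: "mgu_atoms \<theta> A B \<Longrightarrow> subst_vars \<theta> \<subseteq> vars_atom A \<union> vars_atom B"
proof (cases A; cases B)
  fix p ts q us assume m: "mgu_atoms \<theta> A B" and A: "A = Pred p ts" and B: "B = Pred q us"
  then have "subst_vars \<theta> \<subseteq> (\<Union>(s, t)\<in>set (zip ts us). vars_trm s \<union> vars_trm t)"
    by (auto simp: is_mgu_def)
  also have "\<dots> \<subseteq> vars_atom A \<union> vars_atom B"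
    using A B by (auto dest: set_zip_leftD set_zip_rightD)
  finally show ?thesis .
qed auto

lemma eq_mgu_vars: "is_mgu \<theta> [(t1, t2)] \<Longrightarrow> subst_vars \<theta> \<subseteq> vars_trm t1 \<union> vars_trm t2"
  by (auto simp: is_mgu_def)


abbreviation "invol \<pi> \<equiv> (\<forall>x. \<pi> (\<pi> x) = x)"
abbreviation "rt \<pi> t \<equiv> subst_trm (rnm \<pi>) t"
abbreviation "rE \<pi> E \<equiv> map (\<lambda>(s, t). (rt \<pi> s, rt \<pi> t)) E"

lemma subst_Var[simp]: "subst_trm Var t = t"
  by (rule subst_trm_id_on) simp

lemma subst_goal_Var[simp]: "subst_goal Var G = G"
  by (rule subst_goal_id_on) simp

lemma comp_rnm: "invol \<pi> \<Longrightarrow> subst_comp (rnm \<pi>) (rnm \<pi>) = Var"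
  by (auto simp: subst_comp_def rnm_def)

lemma rt_rt[simp]: "invol \<pi> \<Longrightarrow> rt \<pi> (rt \<pi> t) = t"
  by (simp add: subst_trm_comp comp_rnm)

lemma rg_rg[simp]: "invol \<pi> \<Longrightarrow> subst_goal (rnm \<pi>) (subst_goal (rnm \<pi>) G) = G"
  by (simp add: subst_goal_comp comp_rnm)

lemma vars_rt: "vars_trm (rt \<pi> t) = \<pi> ` vars_trm t"
  by (auto simp: vars_subst_trm rnm_def)

lemma vars_ra: "vars_atom (subst_atom (rnm \<pi>) A) = \<pi> ` vars_atom A"
  by (auto simp: vars_subst_atom rnm_def)

lemma vars_rg: "vars_goal (subst_goal (rnm \<pi>) G) = \<pi> ` vars_goal G"
  by (auto simp: vars_subst_goal rnm_def)

lemma vars_rc: "vars_clause (subst_clause (rnm \<pi>) C) = \<pi> ` vars_clause C"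
  by (auto simp: vars_clause_def vars_ra vars_rg)

lemma comp_conj: "invol \<pi> \<Longrightarrow> subst_comp (rnm \<pi>) (cnj \<pi> \<theta>) = subst_comp \<theta> (rnm \<pi>)"
  by (auto simp: subst_comp_def rnm_def cnj_def)

lemma conj_rt: "invol \<pi> \<Longrightarrow> subst_trm (cnj \<pi> \<theta>) (rt \<pi> t) = rt \<pi> (subst_trm \<theta> t)"
  by (simp add: subst_trm_comp comp_conj)

lemma conj_ra: "invol \<pi> \<Longrightarrow> subst_atom (cnj \<pi> \<theta>) (subst_atom (rnm \<pi>) A) = subst_atom (rnm \<pi>) (subst_atom \<theta> A)"
  by (simp add: subst_atom_comp comp_conj)

lemma conj_rg: "invol \<pi> \<Longrightarrow> subst_goal (cnj \<pi> \<theta>) (subst_goal (rnm \<pi>) G) = subst_goal (rnm \<pi>) (subst_goal \<theta> G)"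
  by (simp add: subst_goal_comp comp_conj)

lemma rt_inj: "invol \<pi> \<Longrightarrow> rt \<pi> s = rt \<pi> t \<longleftrightarrow> s = t"
  by (metis rt_rt)

lemma unifier_rE: "invol \<pi> \<Longrightarrow> unifier \<tau> (rE \<pi> E) \<longleftrightarrow> unifier (subst_comp (rnm \<pi>) \<tau>) E"
  by (auto simp: unifier_def subst_trm_comp)

lemma dom_conj: "invol \<pi> \<Longrightarrow> subst_dom (cnj \<pi> \<theta>) = \<pi> ` subst_dom \<theta>"
proof -
  assume i: "invol \<pi>"
  have "x \<in> subst_dom (cnj \<pi> \<theta>) \<longleftrightarrow> \<pi> x \<in> subst_dom \<theta>" for x
  proof -
    have h: "Var x = rt \<pi> (Var (\<pi> x))" using i by (simp add: rnm_def)
    have "cnj \<pi> \<theta> x = Var x \<longleftrightarrow> \<theta> (\<pi> x) = Var (\<pi> x)"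
      unfolding cnj_def by (subst h, rule rt_inj[OF i])
    then show ?thesis by (simp add: subst_dom_def)
  qed
  then show ?thesis using i by (auto simp: image_iff) (metis)
qed

lemma vars_conj: "invol \<pi> \<Longrightarrow> subst_vars (cnj \<pi> \<theta>) = \<pi> ` subst_vars \<theta>"
proof -
  assume i: "invol \<pi>"
  have "(\<Union>x\<in>\<pi> ` subst_dom \<theta>. vars_trm (cnj \<pi> \<theta> x)) = (\<Union>y\<in>subst_dom \<theta>. \<pi> ` vars_trm (\<theta> y))"
    using i by (simp add: cnj_def vars_rt)
  then show ?thesis using i by (simp add: subst_vars_def dom_conj image_Un image_UN)
qed

lemma is_mgu_conj: "invol \<pi> \<Longrightarrow> is_mgu \<theta> E \<Longrightarrow> is_mgu (cnj \<pi> \<theta>) (rE \<pi> E)"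
proof -
  assume i: "invol \<pi>" and m: "is_mgu \<theta> E"
  have u: "unifier (cnj \<pi> \<theta>) (rE \<pi> E)"
    using m i by (simp add: unifier_rE comp_conj) (auto simp: unifier_def is_mgu_def subst_trm_comp[symmetric])
  have g: "\<exists>\<eta>. \<tau> = subst_comp (cnj \<pi> \<theta>) \<eta>" if t: "unifier \<tau> (rE \<pi> E)" for \<tau>
  proof -
    from t i have "unifier (subst_comp (rnm \<pi>) \<tau>) E" by (simp add: unifier_rE)
    with m obtain \<eta> where e: "subst_comp (rnm \<pi>) \<tau> = subst_comp \<theta> \<eta>" by (auto simp: is_mgu_def)
    have "\<tau> = subst_comp (cnj \<pi> \<theta>) (subst_comp (rnm \<pi>) \<eta>)"
    proof
      fix x
      have "subst_comp (cnj \<pi> \<theta>) (subst_comp (rnm \<pi>) \<eta>) x = subst_trm \<eta> (\<theta> (\<pi> x))"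
        using i by (simp add: subst_comp_def cnj_def subst_trm_comp rnm_def)
      also have "\<dots> = subst_comp (rnm \<pi>) \<tau> (\<pi> x)" using e by (simp add: subst_comp_def)
      also have "\<dots> = \<tau> x" using i by (simp add: subst_comp_def rnm_def)
      finally show "\<tau> x = subst_comp (cnj \<pi> \<theta>) (subst_comp (rnm \<pi>) \<eta>) x" by simp
    qed
    then show ?thesis by blast
  qed
  have r: "subst_vars (cnj \<pi> \<theta>) \<subseteq> (\<Union>(s, t)\<in>set (rE \<pi> E). vars_trm s \<union> vars_trm t)"
  proof -
    have "subst_vars \<theta> \<subseteq> (\<Union>(s, t)\<in>set E. vars_trm s \<union> vars_trm t)" using m by (simp add: is_mgu_def)
    then have "\<pi> ` subst_vars \<theta> \<subseteq> \<pi> ` (\<Union>(s, t)\<in>set E. vars_trm s \<union> vars_trm t)" by blast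
    also have "\<dots> = (\<Union>(s, t)\<in>set (rE \<pi> E). vars_trm s \<union> vars_trm t)"
      by (force simp: vars_rt)
    finally show ?thesis using i by (simp add: vars_conj)
  qed
  have id: "subst_comp (cnj \<pi> \<theta>) (cnj \<pi> \<theta>) = cnj \<pi> \<theta>"
  proof
    fix x
    have c: "cnj \<pi> \<theta> x = rt \<pi> (\<theta> (\<pi> x))" by (simp add: cnj_def)
    have "subst_comp (cnj \<pi> \<theta>) (cnj \<pi> \<theta>) x = subst_trm (cnj \<pi> \<theta>) (cnj \<pi> \<theta> x)"
      by (simp add: subst_comp_def)
    also have "\<dots> = rt \<pi> (subst_comp \<theta> \<theta> (\<pi> x))"
      unfolding c conj_rt[OF i] by (simp add: subst_comp_def)
    finally have "subst_comp (cnj \<pi> \<theta>) (cnj \<pi> \<theta>) x = rt \<pi> (subst_comp \<theta> \<theta> (\<pi> x))" .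
    then show "subst_comp (cnj \<pi> \<theta>) (cnj \<pi> \<theta>) x = cnj \<pi> \<theta> x"
      using m by (simp add: is_mgu_def cnj_def)
  qed
  show ?thesis using u g r id by (simp add: is_mgu_def)
qed

lemma nonunif_ren: "invol \<pi> \<Longrightarrow> \<not> unifiable [(t1, t2)] \<Longrightarrow> \<not> unifiable [(rt \<pi> t1, rt \<pi> t2)]"
  using unifier_rE[of \<pi> _ "[(t1, t2)]"] by (auto simp: unifiable_def)

lemma mgu_atoms_conj: "invol \<pi> \<Longrightarrow> mgu_atoms \<theta> A B \<Longrightarrow>
   mgu_atoms (cnj \<pi> \<theta>) (subst_atom (rnm \<pi>) A) (subst_atom (rnm \<pi>) B)"
proof (cases A; cases B)
  fix p ts q us assume i: "invol \<pi>" and m: "mgu_atoms \<theta> A B" and A: "A = Pred p ts" and B: "B = Pred q us"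
  have "zip (map (rt \<pi>) ts) (map (rt \<pi>) us) = rE \<pi> (zip ts us)" by (simp add: zip_map_map)
  then show ?thesis using m A B is_mgu_conj[OF i] by auto
qed auto

lemma bij_invol: "invol \<pi> \<Longrightarrow> bij \<pi>"
  by (metis bijI' )

lemma variant_ren: "invol \<pi> \<Longrightarrow> variant C' C \<Longrightarrow> variant (subst_clause (rnm \<pi>) C') C"
proof -
  assume i: "invol \<pi>" and "variant C' C"
  then obtain \<rho> where b: "bij \<rho>" and c: "C' = subst_clause (\<lambda>x. Var (\<rho> x)) C" by (auto simp: variant_def)
  have "subst_clause (rnm \<pi>) C' = subst_clause (\<lambda>x. Var ((\<pi> \<circ> \<rho>) x)) C"
    using c by (simp add: subst_clause_comp subst_comp_def rnm_def)
  moreover have "bij (\<pi> \<circ> \<rho>)" using b bij_invol[OF i] by (simp add: bij_comp)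
  ultimately show ?thesis by (auto simp: variant_def)
qed

lemma nonbasic_ren[simp]: "nonbasic (subst_atom \<sigma> A) = nonbasic A"
  by (cases A) auto

lemma step_ren:
  assumes s: "step P G G'" and i: "invol \<pi>"
  shows "step P (subst_goal (rnm \<pi>) G) (subst_goal (rnm \<pi>) G')"
  using s
proof cases
  case (eq \<theta> t1 t2 G0)
  have m: "is_mgu (cnj \<pi> \<theta>) [(rt \<pi> t1, rt \<pi> t2)]" using is_mgu_conj[OF i eq(3)] by simp
  show ?thesis using step.eq[OF m, of P "subst_goal (rnm \<pi>) G0"] eq i by (simp add: conj_rg)
next
  case (neq t1 t2)
  show ?thesis using step.neq[OF nonunif_ren[OF i neq(2)], of P "subst_goal (rnm \<pi>) G'"] neq by simp
next
  case (res A C C' G0 \<theta>)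
  have inj: "inj \<pi>" using bij_invol[OF i] bij_is_inj by blast
  have d: "vars_clause (subst_clause (rnm \<pi>) C') \<inter> vars_goal (subst_atom (rnm \<pi>) A # subst_goal (rnm \<pi>) G0) = {}"
  proof -
    have "vars_goal (subst_atom (rnm \<pi>) A # subst_goal (rnm \<pi>) G0) = \<pi> ` vars_goal (A # G0)"
      by (simp add: vars_ra vars_rg image_Un)
    then show ?thesis using res(6) inj by (simp add: vars_rc image_Int[OF inj, symmetric])
  qed
  have "step P (subst_atom (rnm \<pi>) A # subst_goal (rnm \<pi>) G0)
      (subst_goal (cnj \<pi> \<theta>) (bd_cl (subst_clause (rnm \<pi>) C') @ subst_goal (rnm \<pi>) G0))"
  proof (rule step.res)
    show "nonbasic (subst_atom (rnm \<pi>) A)" using res(3) by simp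
    show "C \<in> P" by fact
    show "variant (subst_clause (rnm \<pi>) C') C" using variant_ren[OF i res(5)] .
    show "mgu_atoms (cnj \<pi> \<theta>) (subst_atom (rnm \<pi>) A) (hd_cl (subst_clause (rnm \<pi>) C'))"
      using mgu_atoms_conj[OF i res(7)] by simp
  qed (rule d)
  then show ?thesis using res i by (simp add: conj_rg)
qed


definition ic :: "('f, 'p, 'v) goal \<Rightarrow> nat" where
  "ic G = (if G \<noteq> [] \<and> nonbasic (hd G) then 1 else 0)"

inductive sd :: "('f, 'p, 'v) program \<Rightarrow> ('f, 'p, 'v) goal \<Rightarrow> nat \<Rightarrow> nat \<Rightarrow> bool" for P where
  sd0: "sd P [] 0 0"
| sdS: "step P G G' \<Longrightarrow> sd P G' n l \<Longrightarrow> sd P G (Suc n) (l + ic G)"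

lemma step_nonempty: "step P G G' \<Longrightarrow> G \<noteq> []"
  by (induction rule: step.induct) auto

lemma ic_ren[simp]: "ic (subst_goal \<sigma> G) = ic G"
  by (cases G) (auto simp: ic_def)

lemma ic_app: "G \<noteq> [] \<Longrightarrow> ic (G @ D) = ic G"
  by (cases G) (auto simp: ic_def)

lemma sd_ren: "sd P G n l \<Longrightarrow> invol \<pi> \<Longrightarrow> sd P (subst_goal (rnm \<pi>) G) n l"
proof (induction rule: sd.induct)
  case sd0 then show ?case by (simp add: sd.sd0)
next
  case (sdS G G' n l)
  then show ?case using sd.sdS[OF step_ren[OF sdS(1) sdS(4)]] by simp
qed

lemma fresh_invol:
  fixes X W :: "'v::infinite set"
  assumes fX: "finite X" and fW: "finite W"
  shows "\<exists>\<pi>. invol \<pi> \<and> \<pi> ` X \<inter> (X \<union> W) = {} \<and> (\<forall>x. x \<notin> X \<and> x \<notin> \<pi> ` X \<longrightarrow> \<pi> x = x)"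
proof -
  have "infinite (UNIV - (X \<union> W))" using fX fW by (simp add: infinite_UNIV)
  then obtain Y where Y: "Y \<subseteq> UNIV - (X \<union> W)" "finite Y" "card Y = card X"
    using infinite_arbitrarily_large by blast
  then obtain f where f: "bij_betw f X Y" using finite_same_card_bij fX by metis
  define \<pi> where "\<pi> x = (if x \<in> X then f x else if x \<in> Y then inv_into X f x else x)" for x
  have fY: "f ` X = Y" using f by (simp add: bij_betw_def)
  have injf: "inj_on f X" using f by (simp add: bij_betw_def)
  have XY: "X \<inter> Y = {}" using Y by blast
  have piX: "\<pi> ` X = Y" using fY by (auto simp: \<pi>_def)
  have inv: "invol \<pi>"
  proof
    fix x
    show "\<pi> (\<pi> x) = x"
    proof (cases "x \<in> X")
      case True
      then have "f x \<in> Y" using fY by blast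
      then have "f x \<notin> X" using XY by blast
      then show ?thesis using True \<open>f x \<in> Y\<close> injf by (simp add: \<pi>_def)
    next
      case False
      show ?thesis
      proof (cases "x \<in> Y")
        case True
        then have "inv_into X f x \<in> X" using fY by (metis inv_into_into)
        moreover have "f (inv_into X f x) = x" using True fY by (metis f_inv_into_f)
        ultimately show ?thesis using True False by (simp add: \<pi>_def)
      next
        case False
        then show ?thesis using \<open>x \<notin> X\<close> by (simp add: \<pi>_def)
      qed
    qed
  qed
  have "\<forall>x. x \<notin> X \<and> x \<notin> \<pi> ` X \<longrightarrow> \<pi> x = x" using piX by (simp add: \<pi>_def)
  moreover have "\<pi> ` X \<inter> (X \<union> W) = {}" using piX Y by blast
  ultimately show ?thesis using inv by blast
qed

lemma rnm_id[simp]: "rnm (\<lambda>x. x) = Var"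
  by (simp add: rnm_def)

lemma lift:
  fixes G :: "('f, 'p, 'v::infinite) goal"
  assumes s: "step P G G1" and d: "vars_goal G \<inter> vars_goal D = {}"
  shows "\<exists>\<pi>. invol \<pi> \<and> step P (G @ D) (subst_goal (rnm \<pi>) G1 @ D)
     \<and> vars_goal (subst_goal (rnm \<pi>) G1) \<inter> vars_goal D = {}"
  using s
proof cases
  case (eq \<theta> t1 t2 G0)
  have sv: "subst_vars \<theta> \<subseteq> vars_trm t1 \<union> vars_trm t2" using eq_mgu_vars[OF eq(3)] .
  have sD: "subst_goal \<theta> D = D" using sv d eq(1) by (intro subst_goal_disj) auto
  have st: "step P (G @ D) (G1 @ D)"
    using step.eq[OF eq(3), of P "G0 @ D"] eq sD by simp
  have "vars_goal G1 \<subseteq> vars_goal G" using vars_subst_goal_bound[of \<theta> G0] sv eq by auto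
  then have "vars_goal G1 \<inter> vars_goal D = {}" using d by blast
  then show ?thesis using st by (intro exI[of _ "\<lambda>x. x"]) simp
next
  case (neq t1 t2)
  have st: "step P (G @ D) (G1 @ D)" using step.neq[OF neq(2), of P "G1 @ D"] neq by simp
  have "vars_goal G1 \<inter> vars_goal D = {}" using d neq by auto
  then show ?thesis using st by (intro exI[of _ "\<lambda>x. x"]) simp
next
  case (res A C C' G0 \<theta>)
  define X where "X = vars_clause C'"
  obtain \<pi> where i: "invol \<pi>" and pX: "\<pi> ` X \<inter> (X \<union> (vars_goal G \<union> vars_goal D)) = {}"
    and fx: "\<forall>x. x \<notin> X \<and> x \<notin> \<pi> ` X \<longrightarrow> \<pi> x = x"
    using fresh_invol[of X "vars_goal G \<union> vars_goal D"] unfolding X_def by (meson finite_UnI finite_vars_clause finite_vars_goal)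
  have XG: "X \<inter> vars_goal G = {}" using res(1,6) by (simp add: X_def)
  have fixG: "\<forall>x\<in>vars_goal G. \<pi> x = x" using fx XG pX by blast
  have "\<pi> ` vars_goal G = (\<lambda>x. x) ` vars_goal G" by (rule image_cong) (use fixG in auto)
  then have imG: "\<pi> ` vars_goal G = vars_goal G" by simp
  have rA: "subst_atom (rnm \<pi>) A = A"
    using fixG res(1) by (intro subst_atom_id_on) (auto simp: rnm_def)
  have rG0: "subst_goal (rnm \<pi>) G0 = G0"
    using fixG res(1) by (intro subst_goal_id_on) (auto simp: rnm_def)
  define C'' where "C'' = subst_clause (rnm \<pi>) C'"
  have vC: "vars_clause C'' = \<pi> ` X" by (simp add: C''_def X_def vars_rc)
  have m: "mgu_atoms (cnj \<pi> \<theta>) A (hd_cl C'')"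
    using mgu_atoms_conj[OF i res(7)] rA by (simp add: C''_def)
  have dj: "vars_clause C'' \<inter> vars_goal (A # (G0 @ D)) = {}"
    using vC pX res(1) by auto
  have st: "step P (A # (G0 @ D)) (subst_goal (cnj \<pi> \<theta>) (bd_cl C'' @ G0 @ D))"
    unfolding C''_def by (rule step.res[OF res(3,4) variant_ren[OF i res(5)] dj[unfolded C''_def] m[unfolded C''_def]])
  have sv: "subst_vars \<theta> \<subseteq> vars_goal G \<union> X"
    using mgu_vars[OF res(7)] res(1) by (auto simp: X_def vars_clause_def)
  have K: "\<pi> ` (vars_goal G \<union> X) \<inter> vars_goal D = {}"
    using imG pX d by (auto simp: image_Un)
  have sD: "subst_goal (cnj \<pi> \<theta>) D = D"
  proof (rule subst_goal_disj)
    have "subst_vars (cnj \<pi> \<theta>) \<subseteq> \<pi> ` (vars_goal G \<union> X)" using sv i by (auto simp: vars_conj)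
    then show "subst_vars (cnj \<pi> \<theta>) \<inter> vars_goal D = {}" using K by blast
  qed
  have eqn: "subst_goal (cnj \<pi> \<theta>) (bd_cl C'' @ G0 @ D) = subst_goal (rnm \<pi>) G1 @ D"
  proof -
    have e1: "bd_cl C'' @ G0 = subst_goal (rnm \<pi>) (bd_cl C' @ G0)"
      unfolding subst_goal_append rG0 C''_def bd_subst_clause ..
    have "subst_goal (cnj \<pi> \<theta>) (bd_cl C'' @ G0) = subst_goal (rnm \<pi>) G1"
      unfolding e1 conj_rg[OF i] res(2) ..
    then show ?thesis unfolding append_assoc[symmetric] subst_goal_append sD by simp
  qed
  have "vars_goal G1 \<subseteq> vars_goal (bd_cl C' @ G0) \<union> subst_vars \<theta>"
    unfolding res(2) by (rule vars_subst_goal_bound)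
  also have "\<dots> \<subseteq> vars_goal G \<union> X"
    using sv res(1) by (auto simp: X_def vars_clause_def)
  finally have vG1: "vars_goal G1 \<subseteq> vars_goal G \<union> X" .
  have "vars_goal (subst_goal (rnm \<pi>) G1) \<subseteq> \<pi> ` (vars_goal G \<union> X)"
    unfolding vars_rg using vG1 by (rule image_mono)
  then have dd: "vars_goal (subst_goal (rnm \<pi>) G1) \<inter> vars_goal D = {}"
    using K by blast
  have "step P (G @ D) (subst_goal (rnm \<pi>) G1 @ D)"
    using st unfolding eqn res(1) by simp
  then show ?thesis using dd i by blast
qed

lemma split:
  assumes s: "step P (G @ D) Y" and ne: "G \<noteq> []" and d: "vars_goal G \<inter> vars_goal D = {}"
  shows "\<exists>G'. Y = G' @ D \<and> step P G G' \<and> vars_goal G' \<inter> vars_goal D = {}"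
proof -
  obtain A G0 where G: "G = A # G0" using ne by (cases G) auto
  from s have s': "step P (A # (G0 @ D)) Y" by (simp add: G)
  then show ?thesis
  proof cases
    case (eq \<theta> t1 t2)
    have sv: "subst_vars \<theta> \<subseteq> vars_trm t1 \<union> vars_trm t2" using eq_mgu_vars[OF eq(3)] .
    have sD: "subst_goal \<theta> D = D" using sv d eq G by (intro subst_goal_disj) auto
    have "vars_goal (subst_goal \<theta> G0) \<subseteq> vars_goal G" using vars_subst_goal_bound[of \<theta> G0] sv eq G by auto
    then show ?thesis using eq sD d step.eq[OF eq(3), of P G0] G
      by (intro exI[of _ "subst_goal \<theta> G0"]) auto
  next
    case (neq t1 t2)
    then show ?thesis using step.neq[OF neq(3), of P G0] G d by auto
  next
    case (res C C' \<theta>)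
    have dj: "vars_clause C' \<inter> vars_goal (A # G0) = {}" and dj2: "vars_clause C' \<inter> vars_goal D = {}"
      using res(5) by auto
    have sv: "subst_vars \<theta> \<subseteq> vars_goal G \<union> vars_clause C'"
      using mgu_vars[OF res(6)] G by (auto simp: vars_clause_def)
    have sD: "subst_goal \<theta> D = D" using sv d dj2 by (intro subst_goal_disj) auto
    have st: "step P G (subst_goal \<theta> (bd_cl C' @ G0))"
      unfolding G by (rule step.res[OF res(2,3,4) dj res(6)])
    have "vars_goal (subst_goal \<theta> (bd_cl C' @ G0)) \<subseteq> vars_goal (bd_cl C' @ G0) \<union> subst_vars \<theta>"
      by (rule vars_subst_goal_bound)
    also have "\<dots> \<subseteq> vars_goal G \<union> vars_clause C'"
      using sv G by (auto simp: vars_clause_def)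
    finally have "vars_goal (subst_goal \<theta> (bd_cl C' @ G0)) \<inter> vars_goal D = {}"
      using d dj2 by blast
    moreover have "Y = subst_goal \<theta> (bd_cl C' @ G0) @ D" using res(1) sD by simp
    ultimately show ?thesis using st by blast
  qed
qed


definition dok :: "('f, 'p, 'v) goal \<Rightarrow> bool" where
  "dok D \<longleftrightarrow> (\<forall>s t. Neq s t \<in> set D \<longrightarrow> \<not> unifiable [(s, t)])"

lemma ic_Neq[simp]: "ic (Neq s t # X) = 0"
  by (simp add: ic_def)

lemma sd_Neq: "sd P (Neq s t # X) n l \<longleftrightarrow> (\<exists>n'. n = Suc n' \<and> \<not> unifiable [(s, t)] \<and> sd P X n' l)"
proof
  assume "sd P (Neq s t # X) n l"
  then show "\<exists>n'. n = Suc n' \<and> \<not> unifiable [(s, t)] \<and> sd P X n' l"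
  proof cases
    case (sdS G' n' l')
    from sdS have st: "step P (Neq s t # X) G'" by simp
    from st have "G' = X \<and> \<not> unifiable [(s, t)]"
      by cases auto
    then show ?thesis using sdS by auto
  qed
next
  assume "\<exists>n'. n = Suc n' \<and> \<not> unifiable [(s, t)] \<and> sd P X n' l"
  then obtain n' where "n = Suc n'" "\<not> unifiable [(s, t)]" "sd P X n' l" by blast
  then show "sd P (Neq s t # X) n l"
    using sd.sdS[OF step.neq[of s t P X], of n' l] by simp
qed

lemma D_lemma: "\<forall>A\<in>set D. is_diseq A \<Longrightarrow>
  sd P (D @ X) n l \<longleftrightarrow> (dok D \<and> length D \<le> n \<and> sd P X (n - length D) l)"
proof (induction D arbitrary: n)
  case Nil
  then show ?case by (simp add: dok_def)
next
  case (Cons A D)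
  obtain s t where A: "A = Neq s t" using Cons(2) by (auto simp: is_diseq_def)
  have IH: "\<And>n. sd P (D @ X) n l \<longleftrightarrow> (dok D \<and> length D \<le> n \<and> sd P X (n - length D) l)"
    using Cons by simp
  have dk: "dok (A # D) \<longleftrightarrow> \<not> unifiable [(s, t)] \<and> dok D" using A by (auto simp: dok_def)
  show ?case
    unfolding A append_Cons sd_Neq IH using dk A by (cases n) auto
qed

lemma GD_fwd:
  assumes dis: "\<forall>A\<in>set D. is_diseq A"
  shows "sd P (G @ D) n l \<Longrightarrow> vars_goal G \<inter> vars_goal D = {} \<Longrightarrow>
    dok D \<and> length D \<le> n \<and> sd P G (n - length D) l"
proof (induction n arbitrary: G l)
  case 0
  from 0(1) have "G @ D = [] \<and> l = 0" by cases auto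
  then show ?case by (simp add: dok_def sd.sd0)
next
  case (Suc m)
  show ?case
  proof (cases "G = []")
    case True
    then show ?thesis using Suc(2) D_lemma[OF dis, of P "[]"] by simp
  next
    case False
    from Suc(2) obtain Y l' where st: "step P (G @ D) Y" and sY: "sd P Y m l'" and l: "l = l' + ic (G @ D)"
      by cases auto
    from split[OF st False Suc(3)] obtain G' where G': "Y = G' @ D" "step P G G'"
      "vars_goal G' \<inter> vars_goal D = {}" by blast
    from Suc.IH[of G' l'] sY G' have ih: "dok D" "length D \<le> m" "sd P G' (m - length D) l'" by auto
    have "sd P G (Suc (m - length D)) (l' + ic G)" by (rule sd.sdS[OF G'(2) ih(3)])
    moreover have "Suc m - length D = Suc (m - length D)" using ih(2) by simp
    ultimately show ?thesis using ih l ic_app[OF False] by simp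
  qed
qed

lemma GD_bwd:
  fixes G :: "('f, 'p, 'v::infinite) goal"
  assumes dis: "\<forall>A\<in>set D. is_diseq A" and dk: "dok D"
  shows "sd P G m l \<Longrightarrow> vars_goal G \<inter> vars_goal D = {} \<Longrightarrow> sd P (G @ D) (m + length D) l"
proof (induction m arbitrary: G l)
  case 0
  from 0(1) have "G = [] \<and> l = 0" by cases auto
  then show ?case using D_lemma[OF dis, of P "[]" "length D" 0] dk by (simp add: sd.sd0)
next
  case (Suc k)
  from Suc(2) obtain G1 l1 where st: "step P G G1" and s1: "sd P G1 k l1" and l: "l = l1 + ic G"
    by cases auto
  have ne: "G \<noteq> []" using step_nonempty[OF st] .
  from lift[OF st Suc(3)] obtain \<pi> where i: "invol \<pi>"
    and st2: "step P (G @ D) (subst_goal (rnm \<pi>) G1 @ D)"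
    and d2: "vars_goal (subst_goal (rnm \<pi>) G1) \<inter> vars_goal D = {}" by blast
  have "sd P (subst_goal (rnm \<pi>) G1 @ D) (k + length D) l1"
    using Suc.IH[OF sd_ren[OF s1 i] d2] .
  from sd.sdS[OF st2 this] show ?case using l ic_app[OF ne] by simp
qed

lemma key:
  fixes G :: "('f, 'p, 'v::infinite) goal"
  assumes dis: "\<forall>A\<in>set D. is_diseq A" and d: "vars_goal G \<inter> vars_goal D = {}"
  shows "sd P (G @ D) = sd P (D @ G)"
proof (intro ext)
  fix n l
  have "sd P (G @ D) n l \<longleftrightarrow> (dok D \<and> length D \<le> n \<and> sd P G (n - length D) l)"
  proof
    assume "sd P (G @ D) n l" then show "dok D \<and> length D \<le> n \<and> sd P G (n - length D) l"
      using GD_fwd[OF dis] d by blast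
  next
    assume a: "dok D \<and> length D \<le> n \<and> sd P G (n - length D) l"
    then have "sd P (G @ D) (n - length D + length D) l" using GD_bwd[OF dis] d by blast
    then show "sd P (G @ D) n l" using a by simp
  qed
  then show "sd P (G @ D) n l = sd P (D @ G) n l" using D_lemma[OF dis] by simp
qed

lemma steps_sd: "steps P X [] \<longleftrightarrow> (\<exists>n l. sd P X n l)"
proof
  assume "steps P X []"
  then show "\<exists>n l. sd P X n l"
  proof (induction rule: converse_rtranclp_induct)
    case base then show ?case using sd.sd0 by blast
  next
    case (step y z) then show ?case using sd.sdS by blast
  qed
next
  assume "\<exists>n l. sd P X n l"
  then obtain n l where "sd P X n l" by blast
  then show "steps P X []"
    by (induction rule: sd.induct) (auto intro: converse_rtranclp_into_rtranclp)
qed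

lemma lambda_Cons: "lambda_d (G # ds) = ic G + lambda_d ds"
  by (simp add: lambda_d_def ic_def)

lemma sd_to_ds: "sd P X n l \<Longrightarrow> \<exists>ds. successful_derivation P X ds \<and> deriv_length ds = n \<and> lambda_d ds = l"
proof (induction rule: sd.induct)
  case sd0
  show ?case
    by (intro exI[of _ "[[]]"]) (simp add: successful_derivation_def derivation_def deriv_length_def lambda_d_def)
next
  case (sdS G G' n l)
  then obtain ds where ds: "successful_derivation P G' ds" "deriv_length ds = n" "lambda_d ds = l" by blast
  have ne: "ds \<noteq> []" and h: "hd ds = G'" and dv: "derivation P ds" and la: "last ds = []"
    using ds(1) by (auto simp: successful_derivation_def derivation_def)
  have "derivation P (G # ds)"
    unfolding derivation_def
  proof (intro conjI allI impI)
    fix i assume i: "Suc i < length (G # ds)"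
    show "step P ((G # ds) ! i) ((G # ds) ! Suc i)"
    proof (cases i)
      case 0 then show ?thesis using sdS(1) h ne by (simp add: hd_conv_nth)
    next
      case (Suc j) then show ?thesis using dv i by (simp add: derivation_def)
    qed
  qed simp
  then have "successful_derivation P G (G # ds)" using la ne by (simp add: successful_derivation_def)
  moreover have "deriv_length (G # ds) = Suc n" using ds(2) ne by (cases ds) (auto simp: deriv_length_def)
  moreover have "lambda_d (G # ds) = l + ic G" using ds(3) by (simp add: lambda_Cons)
  ultimately show ?case by blast
qed

lemma ds_to_sd: "successful_derivation P X ds \<Longrightarrow> sd P X (deriv_length ds) (lambda_d ds)"
proof (induction ds arbitrary: X)
  case Nil then show ?case by (simp add: successful_derivation_def derivation_def)
next
  case (Cons Y ds)
  have XY: "Y = X" using Cons(2) by (simp add: successful_derivation_def)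
  show ?case
  proof (cases "ds = []")
    case True
    then have "X = []" using Cons(2) XY by (simp add: successful_derivation_def)
    then show ?thesis using True XY by (simp add: deriv_length_def lambda_d_def sd.sd0)
  next
    case False
    have dv: "\<forall>i. Suc i < length (Y # ds) \<longrightarrow> step P ((Y # ds) ! i) ((Y # ds) ! Suc i)"
      using Cons(2) XY by (simp add: successful_derivation_def derivation_def)
    have st: "step P X (hd ds)" using dv[rule_format, of 0] False XY by (simp add: hd_conv_nth)
    have "derivation P ds" unfolding derivation_def
    proof (intro conjI allI impI)
      fix i assume "Suc i < length ds"
      then show "step P (ds ! i) (ds ! Suc i)" using dv[rule_format, of "Suc i"] by simp
    qed (rule False)
    then have "successful_derivation P (hd ds) ds"
      using Cons(2) False by (simp add: successful_derivation_def)
    from sd.sdS[OF st Cons.IH[OF this]] show ?thesis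
      using False XY by (simp add: deriv_length_def lambda_Cons add.commute)
  qed
qed

lemma sd_ds: "sd P X n l \<longleftrightarrow> (\<exists>ds. successful_derivation P X ds \<and> deriv_length ds = n \<and> lambda_d ds = l)"
  using sd_to_ds ds_to_sd by metis

lemma mu_sd: "mu P X = Inf {enat l | l. \<exists>n. sd P X n l}"
proof -
  have "(\<lambda>ds. enat (lambda_d ds)) ` {ds. successful_derivation P X ds} = {enat l | l. \<exists>n. sd P X n l}"
    by (auto simp: sd_ds)
  then show ?thesis by (simp add: mu_def)
qed

lemma nu_sd: "nu P X = Inf {enat n | n. \<exists>l. sd P X n l}"
proof -
  have "(\<lambda>ds. enat (deriv_length ds)) ` {ds. successful_derivation P X ds} = {enat n | n. \<exists>l. sd P X n l}"
    by (auto simp: sd_ds)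
  then show ?thesis by (simp add: nu_def)
qed

theorem lemma9:
  fixes P :: "('f, 'p, 'v::infinite) program"
    and M :: "'p modes"
    and Diseqs G :: "('f, 'p, 'v) goal"
  assumes "mode_for M P"
    and "safe_prog M P"
    and "prog_satisfies P M"
    and "\<forall>A\<in>set Diseqs. is_diseq A"
    and "vars_goal Diseqs \<inter> vars_goal G = {}"
  shows "(steps P (G @ Diseqs) [] \<longleftrightarrow> steps P (Diseqs @ G) [])
    \<and> mu P (G @ Diseqs) = mu P (Diseqs @ G)
    \<and> nu P (G @ Diseqs) = nu P (Diseqs @ G)"
proof -
  have "sd P (G @ Diseqs) = sd P (Diseqs @ G)"
    using key[OF assms(4)] assms(5) by blast
  then show ?thesis by (simp add: steps_sd mu_sd nu_sd)
qed

end
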